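(* Let $n\ge1$, $s\in(0,1)$, $\varepsilon>0$ and $u\in C^{s+\varepsilon}_{loc}(\mathbb{R}^n)\cap L^2_s(\mathbb{R}^n)$. Then there is a constant $C>0$ depending only on $n$ and $s$ such that for every $R>0$, $$J^s_{ACF}(u,R)\le\frac{C}{R^{2s}}\int_{\mathbb{R}^n}\frac{G_u(x)}{|x|^{n-2s}}\,dx.$$
   Context: $B_r$ is the open ball of radius $r$ centered at $0$. $C_{n,s}:=\left(\int_{\mathbb{R}^n}\frac{1-\cos(\zeta_1)}{|\zeta|^{n+2s}}d\zeta\right)^{-1}$. $L^2_s(\mathbb{R}^n):=\{u\in L^1_{loc}:\int\frac{|u(x)|^2}{1+|x|^{n+2s}}dx<\infty\}$. For $\gamma>0$ not an integer, $C^{\gamma}_{loc}$ denotes $C^{k,\gamma-k}_{loc}$ with $k=\lfloor\gamma\rfloor$. $G_u(y):=C_{n,s}\int_{\mathbb{R}^n}\frac{(u(y)-u(\eta))^2}{|y-\eta|^{n+2s}}d\eta$. $a_{n,s}:=\Gamma(n/2)\pi^{-n/2-1}\sin(\pi s)$, $K^s_r(0,y):=a_{n,s}\left(\frac{r^2}{|y|^2-r^2}\right)^s\frac{1}{|y|^n}$ for $|y|>r$, and $J^s_{ACF}(u,R):=\frac{1}{R^{1+s}}\int_0^R r^s\int_{\mathbb{R}^n\setminus B_r}K^s_r(0,y)G_u(y)\,dy\,dr$. *)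

theory Defs
  imports "HOL-Analysis.Analysis"
begin

text \<open>Ambient space: R^n is an arbitrary euclidean_space 'a, with n = DIM('a).
  The first coordinate zeta_1 is taken along a fixed basis vector.\<close>

definition first_basis :: "'a::euclidean_space" where
  "first_basis = (SOME b. b \<in> Basis)"

definition C_ns :: "real \<Rightarrow> 'a::euclidean_space itself \<Rightarrow> real" where
  "C_ns s TYPE('a) = 1 / enn2real (\<integral>\<^sup>+ \<zeta>. ennreal ((1 - cos (\<zeta> \<bullet> (first_basis::'a)))
        / norm \<zeta> powr (real DIM('a) + 2 * s)) \<partial>lborel)"

definition L2_s :: "real \<Rightarrow> ('a::euclidean_space \<Rightarrow> real) set" where
  "L2_s s = {u. u \<in> borel_measurable lborel
      \<and> (\<forall>K. compact K \<longrightarrow> set_integrable lborel K u)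
      \<and> (\<integral>\<^sup>+ x. ennreal ((u x)\<^sup>2 / (1 + norm x powr (real DIM('a) + 2 * s))) \<partial>lborel) < \<infinity>}"

text \<open>C^{k,alpha}_loc via continuous partial derivatives: D bs is the iterated partial
  derivative along the basis directions in the list bs (innermost last).\<close>
definition Ckalpha_loc :: "nat \<Rightarrow> real \<Rightarrow> ('a::euclidean_space \<Rightarrow> real) set" where
  "Ckalpha_loc k \<alpha> = {u. \<exists>D :: 'a list \<Rightarrow> 'a \<Rightarrow> real.
      D [] = u
    \<and> (\<forall>bs. set bs \<subseteq> Basis \<and> length bs \<le> k \<longrightarrow> continuous_on UNIV (D bs))
    \<and> (\<forall>bs b x. set bs \<subseteq> Basis \<and> length bs < k \<and> b \<in> Basis \<longrightarrow>
          ((\<lambda>t. D bs (x + t *\<^sub>R b)) has_real_derivative D (b # bs) x) (at 0))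
    \<and> (\<forall>bs K. set bs \<subseteq> Basis \<and> length bs = k \<and> compact K \<longrightarrow>
          (\<exists>M. \<forall>x\<in>K. \<forall>y\<in>K. \<bar>D bs x - D bs y\<bar> \<le> M * dist x y powr \<alpha>))}"

text \<open>C^gamma_loc = C^{k, gamma-k}_loc with k = floor gamma for non-integer gamma.
  For integer gamma we use C^{gamma-1,1} (ceiling form), agreeing with the above otherwise.\<close>
definition Cgamma_loc :: "real \<Rightarrow> ('a::euclidean_space \<Rightarrow> real) set" where
  "Cgamma_loc \<gamma> = Ckalpha_loc (nat (\<lceil>\<gamma>\<rceil> - 1)) (\<gamma> - real_of_int (\<lceil>\<gamma>\<rceil> - 1))"

definition G_u :: "real \<Rightarrow> ('a::euclidean_space \<Rightarrow> real) \<Rightarrow> 'a \<Rightarrow> ennreal" where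
  "G_u s u y = ennreal (C_ns s TYPE('a)) *
     (\<integral>\<^sup>+ \<eta>. ennreal ((u y - u \<eta>)\<^sup>2 / norm (y - \<eta>) powr (real DIM('a) + 2 * s)) \<partial>lborel)"

definition a_ns :: "real \<Rightarrow> 'a::euclidean_space itself \<Rightarrow> real" where
  "a_ns s TYPE('a) = Gamma (real DIM('a) / 2) * pi powr (- real DIM('a) / 2 - 1) * sin (pi * s)"

definition K_s :: "real \<Rightarrow> real \<Rightarrow> 'a::euclidean_space \<Rightarrow> real" where
  "K_s s r y = a_ns s TYPE('a) * (r\<^sup>2 / ((norm y)\<^sup>2 - r\<^sup>2)) powr s / norm y ^ DIM('a)"

definition J_ACF :: "real \<Rightarrow> ('a::euclidean_space \<Rightarrow> real) \<Rightarrow> real \<Rightarrow> ennreal" where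
  "J_ACF s u R = ennreal (1 / R powr (1 + s)) *
     (\<integral>\<^sup>+ r \<in> {0<..<R}. ennreal (r powr s) *
        (\<integral>\<^sup>+ y \<in> {y. norm y > r}. ennreal (K_s s r y) * G_u s u y \<partial>lborel) \<partial>lborel)"

end

theory Submission imports Defs begin
lemma G_meas:
  fixes u :: "'a::euclidean_space \<Rightarrow> real"
  assumes [measurable]: "u \<in> borel_measurable borel"
  shows "G_u s u \<in> borel_measurable borel"
  unfolding G_u_def by measurable

lemma aux_meas:
  fixes u :: "'a::euclidean_space \<Rightarrow> real"
  assumes [measurable]: "u \<in> borel_measurable borel"
  shows "(\<lambda>(r::real, y::'a). ennreal (r powr s) * (ennreal (K_s s r y) * G_u s u y * indicator {y. norm y > r} y) * indicator {0<..<R} r)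
     \<in> borel_measurable (lborel \<Otimes>\<^sub>M lborel)"
proof -
  have [measurable]: "G_u s u \<in> borel_measurable borel" by (rule G_meas) simp
  have e: "\<And>r y. indicator {y. norm y > r} y = (if r < norm y then 1 else (0::ennreal))" by simp
  show ?thesis unfolding K_s_def e
    by measurable
qed

lemma powr_subadd:
  fixes x y p :: real
  assumes "0 \<le> x" "0 \<le> y" "0 < p" "p < 1"
  shows "(x + y) powr p \<le> x powr p + y powr p"
proof (cases "x + y = 0")
  case True then show ?thesis using assms by simp
next
  case False
  then have xy: "x + y > 0" using assms by linarith
  have "x * (x+y) powr (p - 1) \<le> x powr p"
  proof (cases "x = 0")
    case False
    then have "x > 0" using assms by simp
    have "(x+y) powr (p-1) \<le> x powr (p-1)"
      by (rule powr_mono2') (use assms \<open>x>0\<close> in auto)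
    then have "x * (x+y) powr (p - 1) \<le> x * x powr (p-1)" using assms by (simp add: mult_left_mono)
    also have "\<dots> = x powr p" using \<open>x>0\<close> by (simp add: powr_diff field_simps powr_one)
    finally show ?thesis .
  qed simp
  moreover have "y * (x+y) powr (p - 1) \<le> y powr p"
  proof (cases "y = 0")
    case False
    then have "y > 0" using assms by simp
    have "(x+y) powr (p-1) \<le> y powr (p-1)"
      by (rule powr_mono2') (use assms \<open>y>0\<close> in auto)
    then have "y * (x+y) powr (p - 1) \<le> y * y powr (p-1)" using assms by (simp add: mult_left_mono)
    also have "\<dots> = y powr p" using \<open>y>0\<close> by (simp add: powr_diff field_simps powr_one)
    finally show ?thesis .
  qed simp
  moreover have "(x+y) powr p = x * (x+y) powr (p - 1) + y * (x+y) powr (p - 1)"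
  proof -
    have e: "(x+y) powr (p-1) = (x+y) powr p / (x+y)" using xy by (simp add: powr_diff)
    have g: "\<And>A z. x * (A / z) + y * (A / z) = (x + y) * A / (z::real)"
      by (simp add: distrib_right add_divide_distrib)
    show ?thesis unfolding e g using xy by simp
  qed
  ultimately show ?thesis by linarith
qed

lemma int_bound:
  fixes s \<rho> m :: real
  assumes "0 < s" "s < 1" "0 \<le> m" "m \<le> \<rho>"
  shows "(\<integral>\<^sup>+ r. ennreal ((\<rho> - r) powr (-s)) * indicator {0..m} r \<partial>lborel) \<le> ennreal (m powr (1 - s) / (1 - s))"
proof -
  define F where "F r = - ((\<rho> - r) powr (1 - s) / (1 - s))" for r
  have "((\<lambda>r. (\<rho> - r) powr (-s)) has_integral (F m - F 0)) {0..m}"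
  proof (rule fundamental_theorem_of_calculus_interior_strong[where S = "{}"])
    show "continuous_on {0..m} F" unfolding F_def
      by (intro continuous_intros continuous_on_powr') (use assms in auto)
    fix x assume x: "x \<in> {0<..<m} - {}"
    then have "\<rho> - x > 0" using assms by auto
    have "((\<lambda>r. (\<rho> - r) powr (1 - s)) has_real_derivative (1 - s) * (\<rho> - x) powr (1 - s - 1) * (0 - 1)) (at x)"
      by (rule DERIV_powr[where g = "\<lambda>r. \<rho> - r" and r="1-s", simplified] derivative_eq_intros refl | use \<open>\<rho> - x > 0\<close> in simp)+
    then have "(F has_real_derivative (\<rho> - x) powr (-s)) (at x)"
      unfolding F_def using assms \<open>\<rho> - x > 0\<close> by (auto intro!: derivative_eq_intros)
    then show "(F has_vector_derivative (\<rho> - x) powr (-s)) (at x)"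
      by (simp add: has_real_derivative_iff_has_vector_derivative)
  qed (use assms in auto)
  then have "(\<integral>\<^sup>+ r. ennreal ((\<rho> - r) powr (-s)) * indicator {0..m} r \<partial>lborel) = ennreal (F m - F 0)"
    by (intro nn_integral_has_integral_lebesgue') auto
  also have "F m - F 0 = (\<rho> powr (1-s) - (\<rho> - m) powr (1 - s)) / (1 - s)"
    unfolding F_def by (simp add: diff_divide_distrib)
  also have "\<dots> \<le> m powr (1 - s) / (1 - s)"
  proof -
    have "\<rho> powr (1-s) \<le> (\<rho> - m) powr (1 - s) + m powr (1-s)"
      using powr_subadd[of "\<rho> - m" m "1 - s"] assms by simp
    then show ?thesis using assms by (intro divide_right_mono) auto
  qed
  finally show ?thesis by (simp add: ennreal_leI)
qed

lemma pw_bound: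
  fixes s \<rho> r :: real
  assumes "0 < s" "0 < r" "r < \<rho>"
  shows "r powr s * (r\<^sup>2 / (\<rho>\<^sup>2 - r\<^sup>2)) powr s \<le> \<rho> powr (2 * s) * (\<rho> - r) powr (-s)"
proof -
  have d: "\<rho>\<^sup>2 - r\<^sup>2 = (\<rho> - r) * (\<rho> + r)" by (simp add: power2_eq_square algebra_simps)
  have pos: "\<rho>\<^sup>2 - r\<^sup>2 > 0" unfolding d using assms by simp
  have "r\<^sup>2 * (\<rho> - r) \<le> \<rho> * (\<rho>\<^sup>2 - r\<^sup>2)"
  proof -
    have "r\<^sup>2 \<le> \<rho> * (\<rho> + r)" using assms by (simp add: power2_eq_square mult_strict_mono less_imp_le mult_mono)
    then have "r\<^sup>2 * (\<rho> - r) \<le> \<rho> * (\<rho> + r) * (\<rho> - r)" using assms by (simp add: mult_right_mono)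
    then show ?thesis unfolding d by (simp add: algebra_simps)
  qed
  then have q: "r\<^sup>2 / (\<rho>\<^sup>2 - r\<^sup>2) \<le> \<rho> / (\<rho> - r)"
    using pos assms by (simp add: divide_simps)
  have "(r\<^sup>2 / (\<rho>\<^sup>2 - r\<^sup>2)) powr s \<le> (\<rho> / (\<rho> - r)) powr s"
    by (rule powr_mono2) (use assms pos q in auto)
  also have "\<dots> = \<rho> powr s * (\<rho> - r) powr (-s)"
    using assms by (simp add: powr_divide powr_minus_divide)
  finally have A: "(r\<^sup>2 / (\<rho>\<^sup>2 - r\<^sup>2)) powr s \<le> \<rho> powr s * (\<rho> - r) powr (-s)" .
  have B: "r powr s \<le> \<rho> powr s" by (rule powr_mono2) (use assms in auto)
  have "r powr s * (r\<^sup>2 / (\<rho>\<^sup>2 - r\<^sup>2)) powr s \<le> \<rho> powr s * (\<rho> powr s * (\<rho> - r) powr (-s))"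
    by (rule mult_mono[OF B A]) auto
  also have "\<dots> = \<rho> powr (2 * s) * (\<rho> - r) powr (-s)"
    by (simp add: powr_add[symmetric] add.commute)
  finally show ?thesis .
qed

lemma a_ns_pos:
  assumes "0 < s" "s < 1"
  shows "a_ns s TYPE('a::euclidean_space) > 0"
proof -
  have "Gamma (real DIM('a) / 2) > 0" by (intro Gamma_real_pos) simp
  moreover have "sin (pi * s) > 0" using assms by (intro sin_gt_zero) auto
  ultimately show ?thesis unfolding a_ns_def by simp
qed

lemma per_y:
  fixes y :: "'a::euclidean_space"
  assumes "0 < s" "s < 1" "0 < R"
  shows "(\<integral>\<^sup>+ r. ennreal (r powr s) * ennreal (K_s s r y) * indicator {y. norm y > r} y * indicator {0<..<R} r \<partial>lborel)
     \<le> ennreal (a_ns s TYPE('a) / (1 - s) * R powr (1 - s) * (1 / norm y powr (real DIM('a) - 2 * s)))"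
proof (cases "y = 0")
  case True
  have "(\<lambda>r. ennreal (r powr s) * ennreal (K_s s r y) * indicator {y. norm y > r} y * indicator {0<..<R} r) = (\<lambda>r. 0)"
    using True by (auto simp: indicator_def fun_eq_iff)
  then show ?thesis by simp
next
  case False
  define \<rho> where "\<rho> = norm y"
  have rp: "\<rho> > 0" using False \<rho>_def by simp
  define a where "a = a_ns s TYPE('a)"
  have ap: "a > 0" unfolding a_def using a_ns_pos assms by blast
  define c where "c = a * \<rho> powr (2 * s) / \<rho> ^ DIM('a)"
  have cp: "c \<ge> 0" unfolding c_def using ap rp by simp
  define m where "m = min R \<rho>"
  have "(\<integral>\<^sup>+ r. ennreal (r powr s) * ennreal (K_s s r y) * indicator {y. norm y > r} y * indicator {0<..<R} r \<partial>lborel)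
     \<le> (\<integral>\<^sup>+ r. ennreal c * (ennreal ((\<rho> - r) powr (-s)) * indicator {0..m} r) \<partial>lborel)"
  proof (intro nn_integral_mono)
    fix r :: real
    show "ennreal (r powr s) * ennreal (K_s s r y) * indicator {y. norm y > r} y * indicator {0<..<R} r
      \<le> ennreal c * (ennreal ((\<rho> - r) powr (-s)) * indicator {0..m} r)"
    proof (cases "0 < r \<and> r < R \<and> r < \<rho>")
      case True
      then have r: "0 < r" "r < R" "r < \<rho>" by auto
      have "r powr s * K_s s r y = a / \<rho> ^ DIM('a) * (r powr s * (r\<^sup>2 / (\<rho>\<^sup>2 - r\<^sup>2)) powr s)"
        unfolding K_s_def a_def \<rho>_def by simp
      also have "\<dots> \<le> a / \<rho> ^ DIM('a) * (\<rho> powr (2 * s) * (\<rho> - r) powr (-s))"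
        using pw_bound[OF assms(1) r(1) r(3)] ap rp by (intro mult_left_mono) auto
      also have "\<dots> = c * (\<rho> - r) powr (-s)" unfolding c_def by simp
      finally have le: "r powr s * K_s s r y \<le> c * (\<rho> - r) powr (-s)" .
      have "ennreal (r powr s) * ennreal (K_s s r y) * indicator {y. norm y > r} y * indicator {0<..<R} r
          = ennreal (r powr s * K_s s r y)"
      proof -
        have "K_s s r y \<ge> 0" unfolding K_s_def a_def[symmetric] using ap by simp
        then show ?thesis using r \<rho>_def by (simp add: ennreal_mult indicator_def)
      qed
      also have "\<dots> \<le> ennreal (c * (\<rho> - r) powr (-s))" by (rule ennreal_leI[OF le])
      also have "\<dots> = ennreal c * (ennreal ((\<rho> - r) powr (-s)) * indicator {0..m} r)"
        using r cp unfolding m_def by (simp add: ennreal_mult indicator_def)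
      finally show ?thesis .
    next
      case False
      then have "indicator {y. norm y > r} y * indicator {0<..<R} r = (0::ennreal)"
        using \<rho>_def by (auto simp: indicator_def)
      then have "ennreal (r powr s) * ennreal (K_s s r y) * indicator {y. norm y > r} y * indicator {0<..<R} r = 0"
        by (metis mult.assoc mult_zero_right)
      then show ?thesis by (metis zero_le)
    qed
  qed
  also have "\<dots> = ennreal c * (\<integral>\<^sup>+ r. ennreal ((\<rho> - r) powr (-s)) * indicator {0..m} r \<partial>lborel)"
    by (rule nn_integral_cmult) measurable
  also have "\<dots> \<le> ennreal c * ennreal (m powr (1 - s) / (1 - s))"
    using int_bound[of s m \<rho>] assms rp unfolding m_def by (intro mult_left_mono) auto
  also have "\<dots> \<le> ennreal c * ennreal (R powr (1 - s) / (1 - s))"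
  proof -
    have "m powr (1 - s) \<le> R powr (1 - s)" unfolding m_def
      by (rule powr_mono2) (use assms rp in auto)
    then show ?thesis using assms by (intro mult_left_mono ennreal_leI divide_right_mono) auto
  qed
  also have "\<dots> = ennreal (c * (R powr (1 - s) / (1 - s)))"
    using cp assms by (subst ennreal_mult) auto
  also have "c * (R powr (1 - s) / (1 - s)) = a / (1 - s) * R powr (1 - s) * (1 / \<rho> powr (real DIM('a) - 2 * s))"
  proof -
    have e: "\<rho> powr (2 * s) / \<rho> ^ DIM('a) = 1 / \<rho> powr (real DIM('a) - 2 * s)"
      using rp by (simp add: powr_diff powr_realpow)
    have "c * (R powr (1 - s) / (1 - s)) = a / (1 - s) * R powr (1 - s) * (\<rho> powr (2 * s) / \<rho> ^ DIM('a))"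
      unfolding c_def by (simp add: divide_inverse mult_ac)
    then show ?thesis using e by simp
  qed
  finally show ?thesis unfolding a_def \<rho>_def .
qed

theorem proposition3p3:
  fixes s :: real
  assumes "0 < s" and "s < 1"
  shows "\<exists>C>0. \<forall>(\<epsilon>::real) (u :: 'a::euclidean_space \<Rightarrow> real) R.
           0 < \<epsilon> \<longrightarrow> u \<in> Cgamma_loc (s + \<epsilon>) \<longrightarrow> u \<in> L2_s s \<longrightarrow> 0 < R \<longrightarrow>
           J_ACF s u R \<le> ennreal (C / R powr (2 * s)) *
             (\<integral>\<^sup>+ x. G_u s u x * ennreal (1 / norm x powr (real DIM('a) - 2 * s)) \<partial>lborel)"
proof (intro exI[of _ "a_ns s TYPE('a) / (1 - s)"] conjI allI impI)
  define a where "a = a_ns s TYPE('a)"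
  have ap: "a > 0" unfolding a_def using a_ns_pos assms by blast
  show "a_ns s TYPE('a) / (1 - s) > 0" using ap assms unfolding a_def by simp
  fix \<epsilon> :: real and u :: "'a \<Rightarrow> real" and R :: real
  assume "u \<in> L2_s s" and Rp: "0 < R"
  then have [measurable]: "u \<in> borel_measurable borel" unfolding L2_s_def by simp
  have [measurable]: "G_u s u \<in> borel_measurable borel" by (rule G_meas) simp
  define G where "G = G_u s u"
  have [measurable]: "G \<in> borel_measurable borel" unfolding G_def by simp
  have e: "\<And>r y. indicator {y. norm y > r} y = (if r < norm y then 1 else (0::ennreal))" by simp
  define g where "g r y = ennreal (r powr s) * (ennreal (K_s s r y) * G y * indicator {y. norm y > r} y) * indicator {0<..<R} r" for r y
  have gm: "case_prod g \<in> borel_measurable (lborel \<Otimes>\<^sub>M lborel)"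
    unfolding g_def G_def using aux_meas[of u s R] by simp
  have "J_ACF s u R = ennreal (1 / R powr (1 + s)) * (\<integral>\<^sup>+ r. (\<integral>\<^sup>+ y. g r y \<partial>lborel) \<partial>lborel)"
  proof -
    have "(ennreal (r powr s) * (\<integral>\<^sup>+ y. ennreal (K_s s r y) * G y * indicator {y. norm y > r} y \<partial>lborel)) * indicator {0<..<R} r
        = (\<integral>\<^sup>+ y. g r y \<partial>lborel)" for r
    proof -
      have "(ennreal (r powr s) * (\<integral>\<^sup>+ y. ennreal (K_s s r y) * G y * indicator {y. norm y > r} y \<partial>lborel))
          = (\<integral>\<^sup>+ y. ennreal (r powr s) * (ennreal (K_s s r y) * G y * indicator {y. norm y > r} y) \<partial>lborel)"
        by (rule nn_integral_cmult[symmetric]) (unfold e K_s_def, measurable)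
      also have "\<dots> * indicator {0<..<R} r = (\<integral>\<^sup>+ y. g r y \<partial>lborel)"
        unfolding g_def by (rule nn_integral_multc[symmetric]) (unfold e K_s_def, measurable)
      finally show ?thesis .
    qed
    then show ?thesis unfolding J_ACF_def G_def by simp
  qed
  also have "(\<integral>\<^sup>+ r. (\<integral>\<^sup>+ y. g r y \<partial>lborel) \<partial>lborel) = (\<integral>\<^sup>+ y. (\<integral>\<^sup>+ r. g r y \<partial>lborel) \<partial>lborel)"
  proof -
    have ps: "pair_sigma_finite (lborel :: real measure) (lborel :: 'a measure)"
      by (intro pair_sigma_finite.intro) (rule lborel.sigma_finite_measure_axioms)+
    show ?thesis using pair_sigma_finite.Fubini'[OF ps gm] by simp
  qed
  also have "\<dots> \<le> (\<integral>\<^sup>+ y. ennreal (a / (1 - s) * R powr (1 - s)) * (G y * ennreal (1 / norm y powr (real DIM('a) - 2 * s))) \<partial>lborel)"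
  proof (intro nn_integral_mono)
    fix y :: 'a
    have "(\<integral>\<^sup>+ r. g r y \<partial>lborel) = (\<integral>\<^sup>+ r. (ennreal (r powr s) * ennreal (K_s s r y) * indicator {y. norm y > r} y * indicator {0<..<R} r) * G y \<partial>lborel)"
      unfolding g_def by (intro nn_integral_cong) (simp add: mult_ac)
    also have "\<dots> = (\<integral>\<^sup>+ r. ennreal (r powr s) * ennreal (K_s s r y) * indicator {y. norm y > r} y * indicator {0<..<R} r \<partial>lborel) * G y"
      by (rule nn_integral_multc) (unfold e K_s_def, measurable)
    also have "\<dots> \<le> ennreal (a / (1 - s) * R powr (1 - s) * (1 / norm y powr (real DIM('a) - 2 * s))) * G y"
      by (intro mult_right_mono per_y[OF assms Rp, of y, folded a_def]) auto
    also have "\<dots> = ennreal (a / (1 - s) * R powr (1 - s)) * (G y * ennreal (1 / norm y powr (real DIM('a) - 2 * s)))"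
      using ap assms by (subst ennreal_mult) (auto simp: mult_ac)
    finally show "(\<integral>\<^sup>+ r. g r y \<partial>lborel) \<le> \<dots>" .
  qed
  also have "\<dots> = ennreal (a / (1 - s) * R powr (1 - s)) * (\<integral>\<^sup>+ y. G y * ennreal (1 / norm y powr (real DIM('a) - 2 * s)) \<partial>lborel)"
    by (rule nn_integral_cmult) measurable
  finally have "J_ACF s u R \<le> ennreal (1 / R powr (1 + s)) * ennreal (a / (1 - s) * R powr (1 - s)) * (\<integral>\<^sup>+ y. G y * ennreal (1 / norm y powr (real DIM('a) - 2 * s)) \<partial>lborel)"
    by (simp add: mult_left_mono mult.assoc)
  also have "ennreal (1 / R powr (1 + s)) * ennreal (a / (1 - s) * R powr (1 - s)) = ennreal (a_ns s TYPE('a) / (1 - s) / R powr (2 * s))"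
  proof -
    have "1 / R powr (1 + s) * (a / (1 - s) * R powr (1 - s)) = a / (1 - s) / R powr (2 * s)"
    proof -
      have "R powr (1 - s) / R powr (1 + s) = R powr (- (2 * s))"
        using Rp by (simp add: powr_diff[symmetric])
      also have "\<dots> = 1 / R powr (2 * s)" by (simp add: powr_minus_divide)
      finally have "R powr (1 - s) / R powr (1 + s) = 1 / R powr (2 * s)" .
      moreover have "1 / R powr (1 + s) * (a / (1 - s) * R powr (1 - s)) = a / (1 - s) * (R powr (1 - s) / R powr (1 + s))"
        by simp
      ultimately show ?thesis by simp
    qed
    then show ?thesis using ap assms Rp unfolding a_def by (subst ennreal_mult[symmetric]) auto
  qed
  finally show "J_ACF s u R \<le> ennreal (a_ns s TYPE('a) / (1 - s) / R powr (2 * s)) *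
             (\<integral>\<^sup>+ x. G_u s u x * ennreal (1 / norm x powr (real DIM('a) - 2 * s)) \<partial>lborel)"
    unfolding G_def .
qed

end
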